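(* Assume $0<\beta\le\alpha<\sqrt n$ and $e\in\mathbb{R}^n$ satisfies $\|e\|=\sqrt n$. For every point $\bar s\in K_e(\beta)^*$, the cone $K_e(\alpha)^*$ contains the open ball $B(\bar s,r)=\{s:\|s-\bar s\|<r\}$, where \[ r=\frac1n\|\bar s\|\Big(\alpha\sqrt{n-\beta^2}-\beta\sqrt{n-\alpha^2}\Big). \]
   Context: $\mathbb{R}^n$ carries the dot product and Euclidean norm. For $0<\gamma<\sqrt n$, $K_e(\gamma)=\{x:e^Tx\ge\gamma\|x\|\}$ and $K_e(\gamma)^*=\{s:x^Ts\ge0\ \forall x\in K_e(\gamma)\}=\{s:e^Ts\ge\sqrt{n-\gamma^2}\|s\|\}$. *)

theory Defs
  imports "HOL-Analysis.Analysis"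
begin

definition Kcone :: "real^'n \<Rightarrow> real \<Rightarrow> (real^'n) set" where
  "Kcone e \<gamma> = {x. e \<bullet> x \<ge> \<gamma> * norm x}"

definition dual_cone :: "(real^'n) set \<Rightarrow> (real^'n) set" where
  "dual_cone K = {s. \<forall>x\<in>K. x \<bullet> s \<ge> 0}"

end

theory Submission
  imports Defs
begin

lemma decomp_ineq:
  fixes u x s :: "'a::real_inner"
  assumes u: "norm u = 1"
  shows "x \<bullet> s \<ge> (u\<bullet>x)*(u\<bullet>s) - sqrt (norm x ^ 2 - (u\<bullet>x)^2) * sqrt (norm s ^ 2 - (u\<bullet>s)^2)"
proof -
  have uu: "u \<bullet> u = 1" using u by (simp add: dot_square_norm)
  define x' where "x' = x - (u\<bullet>x) *\<^sub>R u"
  define s' where "s' = s - (u\<bullet>s) *\<^sub>R u"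
  have e1: "x \<bullet> s = (u\<bullet>x)*(u\<bullet>s) + x' \<bullet> s'"
    unfolding x'_def s'_def using uu
    by (simp add: inner_diff_left inner_diff_right inner_commute algebra_simps)
  have nx: "norm x' ^ 2 = norm x ^ 2 - (u\<bullet>x)^2"
    unfolding x'_def power2_norm_eq_inner using uu
    by (simp add: inner_diff_left inner_diff_right inner_commute algebra_simps power2_eq_square)
  have ns: "norm s' ^ 2 = norm s ^ 2 - (u\<bullet>s)^2"
    unfolding s'_def power2_norm_eq_inner using uu
    by (simp add: inner_diff_left inner_diff_right inner_commute algebra_simps power2_eq_square)
  have a1: "norm x' = sqrt (norm x ^ 2 - (u\<bullet>x)^2)" using nx by (metis norm_ge_zero real_sqrt_unique)
  have a2: "norm s' = sqrt (norm s ^ 2 - (u\<bullet>s)^2)" using ns by (metis norm_ge_zero real_sqrt_unique)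
  have "x' \<bullet> s' \<ge> - (norm x' * norm s')"
    using Cauchy_Schwarz_ineq2[of x' s'] by (simp add: abs_le_iff)
  hence "x' \<bullet> s' \<ge> - (sqrt (norm x ^ 2 - (u\<bullet>x)^2) * sqrt (norm s ^ 2 - (u\<bullet>s)^2))"
    by (simp only: a1 a2)
  thus ?thesis using e1 by linarith
qed

lemma dual_char:
  fixes u s :: "'a::real_inner"
  assumes u: "norm u = 1" and cb: "0 < cb" and sb: "0 \<le> sb" and cs: "cb^2 + sb^2 = 1"
    and K: "\<And>y. u \<bullet> y \<ge> cb * norm y \<Longrightarrow> y \<bullet> s \<ge> 0"
  shows "u \<bullet> s \<ge> sb * norm s"
proof -
  have uu: "u \<bullet> u = 1" using u by (simp add: dot_square_norm)
  have cb1: "cb \<le> 1" using cs sb 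
  proof -
    have h: "sb^2 \<ge> 0" by simp
    have "cb^2 \<le> 1" using cs h by linarith
    thus ?thesis using power2_le_imp_le[of cb 1] by simp
  qed
  define c where "c = u \<bullet> s"
  define s' where "s' = s - c *\<^sub>R u"
  have us': "u \<bullet> s' = 0" unfolding s'_def c_def using uu by (simp add: inner_diff_right)
  have ns: "norm s' ^ 2 = norm s ^ 2 - c^2"
    unfolding s'_def power2_norm_eq_inner c_def using uu
    by (simp add: inner_diff_left inner_diff_right inner_commute algebra_simps power2_eq_square)
  have c0: "c \<ge> 0" using K[of u] u cb1 uu by (simp add: c_def)
  have main: "cb * c \<ge> sb * norm s'"
  proof (cases "s' = 0")
    case True then show ?thesis using c0 cb by simp
  next
    case False
    define w where "w = (1 / norm s') *\<^sub>R s'"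
    have nw: "norm w = 1" using False unfolding w_def by simp
    have uw: "u \<bullet> w = 0" unfolding w_def using us' by simp
    define y where "y = cb *\<^sub>R u - sb *\<^sub>R w"
    have ww: "w \<bullet> w = 1" using nw by (simp add: dot_square_norm)
    have "norm y ^ 2 = cb^2 + sb^2" unfolding y_def power2_norm_eq_inner using uu uw ww
      by (simp add: inner_diff_left inner_diff_right inner_commute algebra_simps power2_eq_square)
    hence ny: "norm y = 1" using cs norm_ge_zero[of y] by (auto simp add: power2_eq_1_iff)
    have "u \<bullet> y = cb" unfolding y_def using uu uw by (simp add: inner_diff_right)
    hence "y \<bullet> s \<ge> 0" using K ny by simp
    moreover have "w \<bullet> s = norm s'"
    proof -
      have "s = s' + c *\<^sub>R u" unfolding s'_def by simp
      hence "w \<bullet> s = w \<bullet> s' + c * (w \<bullet> u)" by (simp add: inner_add_right)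
      also have "w \<bullet> s' = norm s'" unfolding w_def using False
        by (simp add: dot_square_norm power2_eq_square)
      finally show ?thesis using uw by (simp add: inner_commute)
    qed
    moreover have "y \<bullet> s = cb * c - sb * (w \<bullet> s)" unfolding y_def c_def
      by (simp add: inner_diff_left)
    ultimately show ?thesis by simp
  qed
  have "(sb * norm s)^2 \<le> c^2"
  proof -
    have "(sb * norm s')^2 \<le> (cb*c)^2" using main sb by (intro power_mono) auto
    hence "sb^2 * (norm s^2 - c^2) \<le> cb^2 * c^2" using ns by (simp add: power_mult_distrib)
    hence "sb^2 * norm s^2 \<le> (cb^2 + sb^2) * c^2" by (simp add: algebra_simps)
    thus ?thesis using cs by (simp add: power_mult_distrib)
  qed
  hence "sb * norm s \<le> c" using c0 by (rule power2_le_imp_le)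
  thus ?thesis by (simp add: c_def)
qed

theorem lemma5p4:
  fixes e sbar :: "real^'n" and \<alpha> \<beta> :: real
  assumes "0 < \<beta>" and "\<beta> \<le> \<alpha>" and "\<alpha> < sqrt (real CARD('n))"
    and "norm e = sqrt (real CARD('n))"
    and "sbar \<in> dual_cone (Kcone e \<beta>)"
  shows "ball sbar ((1 / real CARD('n)) * norm sbar *
           (\<alpha> * sqrt (real CARD('n) - \<beta>\<^sup>2) - \<beta> * sqrt (real CARD('n) - \<alpha>\<^sup>2)))
         \<subseteq> dual_cone (Kcone e \<alpha>)"
proof
  define N where "N = real CARD('n)"
  define q where "q = sqrt N"
  have N0: "N > 0" unfolding N_def by simp
  have q0: "q > 0" unfolding q_def using N0 by simp
  have qq: "q^2 = N" unfolding q_def using N0 by simp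
  define u where "u = (1/q) *\<^sub>R e"
  have nu: "norm u = 1" unfolding u_def using assms(4) q0 by (simp add: q_def N_def)
  have eu: "\<And>y. e \<bullet> y = q * (u \<bullet> y)" unfolding u_def using q0 by simp
  have aq: "\<alpha> < q" using assms(3) by (simp add: q_def N_def)
  have a0: "0 < \<alpha>" using assms(1,2) by simp
  have aN: "\<alpha>^2 < N" using aq a0 qq by (metis power_strict_mono less_imp_le zero_less_numeral)
  have bN: "\<beta>^2 < N" using aN assms(1,2) by (smt (verit) power_mono)
  define cb where "cb = \<beta>/q"
  define sb where "sb = sqrt (N - \<beta>^2)/q"
  define ca where "ca = \<alpha>/q"
  define sa where "sa = sqrt (N - \<alpha>^2)/q"
  have sbsq: "sb^2 = (N - \<beta>^2)/N" unfolding sb_def using bN qq by (simp add: power_divide)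
  have sasq: "sa^2 = (N - \<alpha>^2)/N" unfolding sa_def using aN qq by (simp add: power_divide)
  have cbsq: "cb^2 = \<beta>^2/N" unfolding cb_def using qq by (simp add: power_divide)
  have casq: "ca^2 = \<alpha>^2/N" unfolding ca_def using qq by (simp add: power_divide)
  have cs_b: "cb^2 + sb^2 = 1" unfolding sbsq cbsq using N0 by (simp add: add_divide_distrib[symmetric])
  have cs_a: "ca^2 + sa^2 = 1" unfolding sasq casq using N0 by (simp add: add_divide_distrib[symmetric])
  have cb0: "cb > 0" unfolding cb_def using assms(1) q0 by simp
  have sb0: "sb \<ge> 0" unfolding sb_def using q0 bN by simp
  have ca0: "ca \<ge> 0" unfolding ca_def using a0 q0 by simp
  have sa0: "sa \<ge> 0" unfolding sa_def using q0 aN by simp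
  define S where "S = norm sbar"
  have dual: "u \<bullet> sbar \<ge> sb * S" unfolding S_def
  proof (rule dual_char[OF nu cb0 sb0 cs_b])
    fix y assume "cb * norm y \<le> u \<bullet> y"
    hence "q * (cb * norm y) \<le> q * (u \<bullet> y)" using q0 by simp
    hence "\<beta> * norm y \<le> e \<bullet> y" using q0 eu unfolding cb_def by simp
    hence "y \<in> Kcone e \<beta>" unfolding Kcone_def by simp
    thus "0 \<le> y \<bullet> sbar" using assms(5) unfolding dual_cone_def by blast
  qed
  have rr: "(1 / real CARD('n)) * norm sbar *
           (\<alpha> * sqrt (real CARD('n) - \<beta>\<^sup>2) - \<beta> * sqrt (real CARD('n) - \<alpha>\<^sup>2))
         = S * (ca * sb - sa * cb)"
    unfolding S_def ca_def sb_def sa_def cb_def N_def[symmetric] using qq q0 N0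
    by (simp add: field_simps power2_eq_square)
  fix s assume "s \<in> ball sbar ((1 / real CARD('n)) * norm sbar *
           (\<alpha> * sqrt (real CARD('n) - \<beta>\<^sup>2) - \<beta> * sqrt (real CARD('n) - \<alpha>\<^sup>2)))"
  hence ds: "norm (s - sbar) < S * (ca * sb - sa * cb)" using rr by (simp add: dist_norm norm_minus_commute)
  show "s \<in> dual_cone (Kcone e \<alpha>)" unfolding dual_cone_def
  proof (intro CollectI ballI)
    fix x assume "x \<in> Kcone e \<alpha>"
    hence "\<alpha> * norm x \<le> q * (u \<bullet> x)" unfolding Kcone_def using eu by simp
    hence xa: "u \<bullet> x \<ge> ca * norm x" unfolding ca_def using q0 by (simp add: field_simps)
    define X where "X = norm x"
    define a where "a = u \<bullet> x"
    define c where "c = u \<bullet> sbar"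
    have X0: "X \<ge> 0" unfolding X_def by simp
    have S0: "S \<ge> 0" unfolding S_def by simp
    have aX: "a \<ge> ca * X" using xa unfolding a_def X_def by simp
    have cS: "c \<ge> sb * S" using dual unfolding c_def by simp
    have ineq: "x \<bullet> sbar \<ge> a * c - sqrt (X^2 - a^2) * sqrt (S^2 - c^2)"
      using decomp_ineq[OF nu, of x sbar] unfolding a_def c_def X_def S_def by simp
    have p1: "a * c \<ge> (ca * X) * (sb * S)"
      using aX cS ca0 sb0 X0 S0 by (intro mult_mono) (auto intro: order_trans[OF mult_nonneg_nonneg])
    have p2: "sqrt (X^2 - a^2) \<le> sa * X"
    proof -
      have h1: "a^2 \<ge> (ca*X)^2" using aX ca0 X0 by (intro power_mono) auto
      have "X^2 = X^2 * (ca^2 + sa^2)" using cs_a by simp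
      hence h2: "X^2 = (ca*X)^2 + (sa*X)^2" by (simp only: power_mult_distrib distrib_left mult.commute)
      from h1 h2 have "X^2 - a^2 \<le> (sa*X)^2" by linarith
      hence "sqrt (X^2 - a^2) \<le> sqrt ((sa*X)^2)" by (rule real_sqrt_le_mono)
      thus ?thesis using sa0 X0 by simp
    qed
    have p3: "sqrt (S^2 - c^2) \<le> cb * S"
    proof -
      have h1: "c^2 \<ge> (sb*S)^2" using cS sb0 S0 by (intro power_mono) auto
      have "S^2 = S^2 * (cb^2 + sb^2)" using cs_b by simp
      hence h2: "S^2 = (cb*S)^2 + (sb*S)^2" by (simp only: power_mult_distrib distrib_left mult.commute)
      from h1 h2 have "S^2 - c^2 \<le> (cb*S)^2" by linarith
      hence "sqrt (S^2 - c^2) \<le> sqrt ((cb*S)^2)" by (rule real_sqrt_le_mono)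
      thus ?thesis using cb0 S0 by simp
    qed
    have p4: "sqrt (X^2 - a^2) * sqrt (S^2 - c^2) \<le> (sa * X) * (cb * S)"
    proof (rule mult_mono[OF p2 p3])
      show "0 \<le> sa * X" using sa0 X0 by simp
      have "\<bar>c\<bar> \<le> \<bar>S\<bar>" using Cauchy_Schwarz_ineq2[of u sbar] nu S0 unfolding c_def S_def by simp
      hence "c^2 \<le> S^2" by (simp add: abs_le_square_iff)
      thus "0 \<le> sqrt (S^2 - c^2)" by simp
    qed
    have xs: "x \<bullet> sbar \<ge> X * (S * (ca * sb - sa * cb))"
      using ineq p1 p4 by (simp add: algebra_simps)
    have "\<bar>x \<bullet> (s - sbar)\<bar> \<le> X * norm (s - sbar)" unfolding X_def by (rule Cauchy_Schwarz_ineq2)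
    moreover have "X * norm (s - sbar) \<le> X * (S * (ca * sb - sa * cb))"
      using ds X0 by (simp add: mult_left_mono)
    moreover have "x \<bullet> s = x \<bullet> sbar + x \<bullet> (s - sbar)" by (simp add: inner_diff_right)
    ultimately show "0 \<le> x \<bullet> s" using xs by linarith
  qed
qed

end
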